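(* Let $L>0$ be fixed and let the constant renormalized force be $F=cN^{\gamma}$ with $c>0$, $\gamma>1$. Then the normalized counting measures of the fixed points, $\mu_N=\frac1N\sum_{i=0}^{N}\delta_{x_i}$ (Dirac masses at the particle positions), converge as $N\to\infty$ in the sense of distributions (weakly) to the Dirac delta measure at $0$.
   Context: A configuration consists of $N+1$ point particles $-L\le x_N<\dots<x_1<x_0\le 0$ on $[-L,0]$ with potential energy $U=\sum_{i=1}^{N}\frac{\alpha_{int}}{x_{i-1}-x_i}-\sum_{i=0}^{N}\int_{-L}^{x_i}\alpha_{ext}F_0\,dx$, $\alpha_{int},\alpha_{ext}>0$, with constant $F_0>0$; the renormalized force is the constant $F=\frac{\alpha_{ext}}{\alpha_{int}}F_0$, which may depend on $N$ (the external force pushes particles towards $0$). Write $\delta_k=x_{k-1}-x_k$, $f_k=\delta_k^{-2}$. The walls at $0,-L$ are completely inelastic. A fixed point is a configuration with $x_0=0$, $f_{k+1}+F=f_k$ for $k=1,\dots,N-1$, and either $x_N=-L$ with $f_N\ge F$, or $x_N>-L$ with $f_N=F$; it exists and is unique. *)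

theory Defs
  imports "HOL-Analysis.Analysis"
begin

text \<open>A configuration of N+1 particles is a function x :: nat => real, of which
  only the values x 0, ..., x N are used.  Gap delta_k = x_(k-1) - x_k and
  f_k = delta_k^(-2).\<close>

definition gap_f :: "(nat \<Rightarrow> real) \<Rightarrow> nat \<Rightarrow> real" where
  "gap_f x k = 1 / (x (k - 1) - x k)\<^sup>2"

definition fixed_point :: "nat \<Rightarrow> real \<Rightarrow> real \<Rightarrow> (nat \<Rightarrow> real) \<Rightarrow> bool" where
  "fixed_point N L F x \<longleftrightarrow>
     (-L \<le> x N) \<and> (\<forall>i<N. x (Suc i) < x i) \<and> x 0 \<le> 0 \<and>
     x 0 = 0 \<and>
     (\<forall>k. 1 \<le> k \<and> k \<le> N - 1 \<longrightarrow> gap_f x (k + 1) + F = gap_f x k) \<and>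
     ((x N = -L \<and> gap_f x N \<ge> F) \<or> (x N > -L \<and> gap_f x N = F))"

end

theory Submission
  imports Defs
begin

lemma sqrt_sum_bound: "(\<Sum>j<n. 1 / sqrt (real j + 1)) \<le> 2 * sqrt (real n)"
proof (induction n)
  case 0 then show ?case by simp
next
  case (Suc n)
  have key: "1 / sqrt (real n + 1) \<le> 2 * sqrt (real n + 1) - 2 * sqrt (real n)"
  proof -
    have "2 * sqrt (real n) * sqrt (real n + 1) \<le> 2 * real n + 1"
    proof -
      have "sqrt (real n) * sqrt (real n + 1) = sqrt (real n * (real n + 1))"
        by (simp add: real_sqrt_mult)
      also have "\<dots> \<le> sqrt ((real n + 1/2)^2)"
        by (rule real_sqrt_le_mono) (simp add: power2_eq_square algebra_simps)
      also have "\<dots> = real n + 1/2" by simp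
      finally show ?thesis by simp
    qed
    moreover have "sqrt (real n + 1) > 0" by simp
    moreover have "sqrt (real n + 1) * sqrt (real n + 1) = real n + 1"
      using real_sqrt_mult_self[of "real n + 1"] by simp
    ultimately show ?thesis
      by (simp add: field_simps)
  qed
  show ?case using Suc key by (simp add: add.commute)
qed

lemma sqrt_sum_bound': "(\<Sum>k<N. 1 / sqrt (real (N - k))) \<le> 2 * sqrt (real N)"
proof -
  have "(\<Sum>k<N. 1 / sqrt (real (N - k))) = (\<Sum>i<N. (\<lambda>j. 1 / sqrt (real j + 1)) (N - Suc i))"
    by (rule sum.cong) (auto simp: Suc_diff_Suc of_nat_diff)
  also have "\<dots> = (\<Sum>j<N. 1 / sqrt (real j + 1))"
    by (rule sum.reindex_bij_witness[where i="\<lambda>i. N - Suc i" and j="\<lambda>i. N - Suc i"]) auto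
  finally show ?thesis using sqrt_sum_bound by simp
qed

lemma fp_bound:
  assumes fp: "fixed_point N L F x" and N: "N \<ge> 1" and F: "F > 0" and i: "i \<le> N"
  shows "-(2 * sqrt (real N) / sqrt F) \<le> x i \<and> x i \<le> 0"
proof -
  from fp have dec: "\<And>i. i < N \<Longrightarrow> x (Suc i) < x i" and x0: "x 0 = 0"
    and rec: "\<And>k. 1 \<le> k \<Longrightarrow> k \<le> N - 1 \<Longrightarrow> gap_f x (k + 1) + F = gap_f x k"
    and fN: "gap_f x N \<ge> F"
    unfolding fixed_point_def by auto
  have mono: "x (i + j) \<le> x i" if "i + j \<le> N" for i j
    using that
  proof (induction j)
    case 0 then show ?case by simp
  next
    case (Suc j)
    then have "x (Suc (i + j)) < x (i + j)" using dec[of "i+j"] by simp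
    then show ?case using Suc by simp
  qed
  have form: "m \<le> N - 1 \<longrightarrow> gap_f x (N - m) = gap_f x N + real m * F" for m
  proof (induction m)
    case 0 then show ?case by simp
  next
    case (Suc m)
    show ?case
    proof
      assume h: "Suc m \<le> N - 1"
      have "gap_f x (N - Suc m + 1) + F = gap_f x (N - Suc m)"
        using rec[of "N - Suc m"] h by simp
      moreover have "N - Suc m + 1 = N - m" using h by simp
      ultimately show "gap_f x (N - Suc m) = gap_f x N + real (Suc m) * F"
        using Suc h by (simp add: algebra_simps)
    qed
  qed
  have step: "x k - x (Suc k) \<le> 1 / sqrt (real (N - k)) / sqrt F" if k: "k < N" for k
  proof -
    define d where "d = x k - x (Suc k)"
    have dpos: "d > 0" using dec[OF k] by (simp add: d_def)
    have "gap_f x (Suc k) = gap_f x N + real (N - Suc k) * F"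
      using form[of "N - Suc k"] k by (simp add: Suc_diff_Suc)
    also have "\<dots> \<ge> real (N - k) * F"
      using fN k by (simp add: of_nat_diff algebra_simps)
    finally have g: "1 / d^2 \<ge> real (N - k) * F"
      by (simp add: gap_f_def d_def)
    have pos: "real (N - k) * F > 0" using k F by simp
    have "d^2 * (real (N - k) * F) \<le> 1"
      using g pos dpos by (simp add: field_simps del: of_nat_diff)
    then have "d^2 \<le> 1 / (real (N - k) * F)"
      using pos by (simp add: field_simps del: of_nat_diff)
    then have "sqrt (d^2) \<le> sqrt (1 / (real (N - k) * F))"
      by (rule real_sqrt_le_mono)
    then show ?thesis using dpos by (simp add: d_def real_sqrt_mult real_sqrt_divide)
  qed
  have tel: "(\<Sum>k<N. x k - x (Suc k)) = x 0 - x N"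
    using sum_lessThan_telescope'[of x N] by simp
  have "(\<Sum>k<N. x k - x (Suc k)) \<le> (\<Sum>k<N. 1 / sqrt (real (N - k)) / sqrt F)"
    by (intro sum_mono step) simp
  also have "\<dots> = (\<Sum>k<N. 1 / sqrt (real (N - k))) / sqrt F"
    by (simp add: sum_divide_distrib)
  also have "\<dots> \<le> 2 * sqrt (real N) / sqrt F"
    using sqrt_sum_bound'[of N] F by (simp add: divide_right_mono)
  finally have "- x N \<le> 2 * sqrt (real N) / sqrt F" using tel x0 by simp
  moreover have "x N \<le> x i" using mono[of i "N - i"] i by simp
  moreover have "x i \<le> x 0" using mono[of 0 i] i by simp
  ultimately show ?thesis using x0 by simp
qed

theorem theorem2:
  fixes L c \<gamma> :: real and x :: "nat \<Rightarrow> nat \<Rightarrow> real"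
  assumes "L > 0" and "c > 0" and "\<gamma> > 1"
    and "\<And>N. N \<ge> 1 \<Longrightarrow> fixed_point N L (c * real N powr \<gamma>) (x N)"
  shows "\<And>\<phi> :: real \<Rightarrow> real. continuous_on UNIV \<phi> \<Longrightarrow> bounded (range \<phi>) \<Longrightarrow>
           (\<lambda>N. (\<Sum>i=0..N. \<phi> (x N i)) / real N) \<longlonglongrightarrow> \<phi> 0"
proof -
  fix \<phi> :: "real \<Rightarrow> real"
  assume cont: "continuous_on UNIV \<phi>"
  define e where "e N = 2 * sqrt (real N powr (1 - \<gamma>) / c)" for N :: nat
  have e0: "e \<longlonglongrightarrow> 0"
  proof -
    have "(\<lambda>N. real N powr (1 - \<gamma>)) \<longlonglongrightarrow> 0"
      by (rule tendsto_neg_powr) (use assms(3) in \<open>auto simp: filterlim_real_sequentially\<close>)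
    then have "(\<lambda>N. real N powr (1 - \<gamma>) / c) \<longlonglongrightarrow> 0 / c"
      by (intro tendsto_divide) (use assms(2) in auto)
    then have "(\<lambda>N. sqrt (real N powr (1 - \<gamma>) / c)) \<longlonglongrightarrow> sqrt 0"
      by (intro tendsto_real_sqrt) simp
    then have "(\<lambda>N. 2 * sqrt (real N powr (1 - \<gamma>) / c)) \<longlonglongrightarrow> 2 * 0"
      by (intro tendsto_mult) auto
    then show ?thesis by (simp add: e_def[abs_def])
  qed
  have bnd: "\<bar>x N i\<bar> \<le> e N" if "N \<ge> 1" "i \<le> N" for N i
  proof -
    have F: "c * real N powr \<gamma> > 0" using that assms(2) by simp
    have b: "-(2 * sqrt (real N) / sqrt (c * real N powr \<gamma>)) \<le> x N i \<and> x N i \<le> 0"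
      by (rule fp_bound[OF assms(4)[OF that(1)] that(1) F that(2)])
    have "sqrt (real N) / sqrt (c * real N powr \<gamma>) = sqrt (real N / (c * real N powr \<gamma>))"
      by (simp add: real_sqrt_divide)
    also have "real N / (c * real N powr \<gamma>) = real N powr (1 - \<gamma>) / c"
      using that(1) by (simp add: powr_diff)
    finally show ?thesis using b by (simp add: e_def)
  qed
  show "(\<lambda>N. (\<Sum>i=0..N. \<phi> (x N i)) / real N) \<longlonglongrightarrow> \<phi> 0"
    unfolding LIMSEQ_iff
  proof (intro allI impI)
    fix r :: real assume r: "r > 0"
    have "isCont \<phi> 0" using cont by (simp add: continuous_on_eq_continuous_at)
    then obtain d where d: "d > 0" and dh: "\<And>y. \<bar>y\<bar> < d \<Longrightarrow> \<bar>\<phi> y - \<phi> 0\<bar> < r / 4"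
      unfolding continuous_at_eps_delta using r
      by (metis dist_real_def diff_zero zero_less_divide_iff zero_less_numeral)
    obtain n1 where n1: "\<And>n. n \<ge> n1 \<Longrightarrow> \<bar>e n\<bar> < d"
      using e0 d unfolding LIMSEQ_iff by fastforce
    obtain n2 :: nat where n2: "real n2 > 4 * \<bar>\<phi> 0\<bar> / r + 4" using reals_Archimedean2 by blast
    show "\<exists>no. \<forall>n\<ge>no. norm ((\<Sum>i=0..n. \<phi> (x n i)) / real n - \<phi> 0) < r"
    proof (intro exI allI impI)
      fix n assume n: "n \<ge> max 1 (max n1 n2)"
      then have n1': "n \<ge> 1" and nn1: "n \<ge> n1" and nn2: "real n \<ge> real n2" by auto
      have npos: "real n > 0" using n1' by simp
      have each: "\<bar>\<phi> (x n i) - \<phi> 0\<bar> \<le> r / 4" if "i \<in> {0..n}" for i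
        using dh[of "x n i"] bnd[OF n1', of i] n1[OF nn1] that by fastforce
      have eq: "(\<Sum>i=0..n. \<phi> (x n i)) / real n - \<phi> 0
            = (\<Sum>i=0..n. \<phi> (x n i) - \<phi> 0) / real n + \<phi> 0 / real n"
        using npos by (simp add: sum_subtractf field_simps)
      have s1: "\<bar>\<Sum>i=0..n. \<phi> (x n i) - \<phi> 0\<bar> \<le> real (Suc n) * (r / 4)"
      proof -
        have "\<bar>\<Sum>i=0..n. \<phi> (x n i) - \<phi> 0\<bar> \<le> (\<Sum>i=0..n. \<bar>\<phi> (x n i) - \<phi> 0\<bar>)"
          by (rule sum_abs)
        also have "\<dots> \<le> (\<Sum>i=0..n. r / 4)" by (rule sum_mono) (rule each)
        finally show ?thesis by simp
      qed
      have "real (Suc n) \<le> 2 * real n" using n1' by simp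
      then have "real (Suc n) * (r / 4) \<le> 2 * real n * (r/4)" using r by simp
      with s1 have t1: "\<bar>(\<Sum>i=0..n. \<phi> (x n i) - \<phi> 0) / real n\<bar> \<le> r / 2"
        using npos by (simp add: field_simps)
      have "4 * \<bar>\<phi> 0\<bar> / r < real n" using n2 nn2 by linarith
      then have "4 * \<bar>\<phi> 0\<bar> < r * real n" using r by (simp add: field_simps)
      then have t2: "\<bar>\<phi> 0 / real n\<bar> < r / 2" using npos r by (simp add: field_simps)
      have tri: "\<bar>(\<Sum>i=0..n. \<phi> (x n i) - \<phi> 0) / real n + \<phi> 0 / real n\<bar>
          \<le> \<bar>(\<Sum>i=0..n. \<phi> (x n i) - \<phi> 0) / real n\<bar> + \<bar>\<phi> 0 / real n\<bar>"
        by (rule abs_triangle_ineq)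
      show "norm ((\<Sum>i=0..n. \<phi> (x n i)) / real n - \<phi> 0) < r"
        unfolding real_norm_def eq using t1 t2 tri by linarith
    qed
  qed
qed

end
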